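(* Let $S$ be a finite poset and let $L=(L_{x,y})_{x,y\in S}$ be the infinitesimal generator of a continuous-time Markov chain on $S$. Then $L$ is the generator of a realizably monotone Markov chain if and only if there exists a function $\Lambda:\mathcal{M}\to[0,\infty)$ such that \[ L_{x,y}=\sum_{f\in\mathcal{M}:\,f(x)=y}\Lambda(f)\qquad\text{for all }x,y\in S,\ x\neq y . \]
   Context: A generator on a finite set $S$ is a real matrix $L=(L_{x,y})_{x,y\in S}$ with $L_{x,y}\ge 0$ for $x\neq y$ and $L_{x,x}=-\sum_{y\neq x}L_{x,y}$; all Markov chains are time-homogeneous and, in continuous time, regular (finitely many jumps in bounded time intervals a.s.). $\mathcal{M}$ denotes the set of increasing maps $f:S\to S$ (i.e. $x\le y\Rightarrow f(x)\le f(y)$). A continuous-time Markov chain on $S$ with transition probabilities $P_t(x,y)$ is realizably monotone if there is a Markov chain $(\xi_t)_{t\ge0}$ with values in $S^S$ (maps $S\to S$) such that $\xi_0=\mathrm{Id}$; for each $z\in S$, $(\xi_t(z))_{t\ge 0}$ is a Markov chain with transition probabilities $P_t$; and $w\le z$ implies $\xi_t(w)\le\xi_t(z)$ for all $t\ge 0$. A generator is called realizably monotone if it generates a realizably monotone chain. *)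

theory Defs
  imports Complex_Main
begin

definition mmult :: "('s::finite \<Rightarrow> 's \<Rightarrow> real) \<Rightarrow> ('s \<Rightarrow> 's \<Rightarrow> real) \<Rightarrow> 's \<Rightarrow> 's \<Rightarrow> real" where
  "mmult A B x y = (\<Sum>z\<in>UNIV. A x z * B z y)"

fun mpow :: "('s::finite \<Rightarrow> 's \<Rightarrow> real) \<Rightarrow> nat \<Rightarrow> 's \<Rightarrow> 's \<Rightarrow> real" where
  "mpow A 0 = (\<lambda>x y. if x = y then 1 else 0)"
| "mpow A (Suc n) = mmult (mpow A n) A"

definition mexp :: "real \<Rightarrow> ('s::finite \<Rightarrow> 's \<Rightarrow> real) \<Rightarrow> 's \<Rightarrow> 's \<Rightarrow> real" where
  "mexp t A x y = (\<Sum>n. t ^ n / fact n * mpow A n x y)"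

definition is_generator :: "('s::finite \<Rightarrow> 's \<Rightarrow> real) \<Rightarrow> bool" where
  "is_generator L \<longleftrightarrow> (\<forall>x y. x \<noteq> y \<longrightarrow> L x y \<ge> 0) \<and>
     (\<forall>x. L x x = - (\<Sum>y\<in>UNIV - {x}. L x y))"

text \<open>Finite-dimensional distributions of the chain with generator Q started at g:
  probability of being at hs!0, hs!1, ... at successive times with nonnegative
  increments ds!0, ds!1, ...\<close>
fun path_prob :: "('s::finite \<Rightarrow> 's \<Rightarrow> real) \<Rightarrow> 's \<Rightarrow> real list \<Rightarrow> 's list \<Rightarrow> real" where
  "path_prob Q g [] [] = 1"
| "path_prob Q g (d # ds) (h # hs) = mexp d Q g h * path_prob Q h ds hs"
| "path_prob Q g _ _ = 0"

text \<open>Finite-dimensional distributions of the coordinate process (xi_t(z)) of a chain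
  on maps S \<Rightarrow> S with generator Q started at the identity.\<close>
definition coord_fdd :: "(('a::finite \<Rightarrow> 'a) \<Rightarrow> ('a \<Rightarrow> 'a) \<Rightarrow> real) \<Rightarrow> 'a \<Rightarrow> real list \<Rightarrow> 'a list \<Rightarrow> real" where
  "coord_fdd Q z ds ys =
     (\<Sum>hs \<in> {hs. length hs = length ys \<and> (\<forall>i<length ys. (hs ! i) z = ys ! i)}. path_prob Q id ds hs)"

text \<open>L generates a realizably monotone chain: there is a Markov chain (xi_t) on S^S
  (given by its generator Q) with xi_0 = Id, each coordinate (xi_t(z)) a Markov chain
  with transition probabilities exp(t L) started at z, and xi_t monotone a.s.\<close>
definition realizably_monotone :: "('a::{finite,order} \<Rightarrow> 'a \<Rightarrow> real) \<Rightarrow> bool" where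
  "realizably_monotone L \<longleftrightarrow>
     (\<exists>Q :: ('a \<Rightarrow> 'a) \<Rightarrow> ('a \<Rightarrow> 'a) \<Rightarrow> real.
        is_generator Q \<and>
        (\<forall>z ds ys. length ds = length ys \<longrightarrow> (\<forall>d\<in>set ds. d \<ge> 0) \<longrightarrow>
            coord_fdd Q z ds ys = path_prob L z ds ys) \<and>
        (\<forall>t\<ge>0. (\<Sum>g\<in>{g. mono g}. mexp t Q id g) = 1))"

end

theory Submission imports Defs begin

definition msz :: "('s::finite \<Rightarrow> 's \<Rightarrow> real) \<Rightarrow> real" where
  "msz A = (\<Sum>x\<in>UNIV. \<Sum>y\<in>UNIV. \<bar>A x y\<bar>)"

lemma msz_ge: "(\<Sum>z\<in>UNIV. \<bar>A z y\<bar>) \<le> msz A"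
  unfolding msz_def
  by (rule sum_mono) (rule member_le_sum, auto)

lemma msz_nonneg: "0 \<le> msz A"
  unfolding msz_def by (intro sum_nonneg) auto

lemma mpow_bound: "\<bar>mpow A n x y\<bar> \<le> msz A ^ n"
proof (induction n arbitrary: y)
  case 0 then show ?case by simp
next
  case (Suc n)
  have "\<bar>mpow A (Suc n) x y\<bar> = \<bar>\<Sum>z\<in>UNIV. mpow A n x z * A z y\<bar>" by (simp add: mmult_def)
  also have "\<dots> \<le> (\<Sum>z\<in>UNIV. \<bar>mpow A n x z * A z y\<bar>)" by (rule sum_abs)
  also have "\<dots> \<le> (\<Sum>z\<in>UNIV. msz A ^ n * \<bar>A z y\<bar>)"
    by (intro sum_mono) (simp add: abs_mult Suc mult_right_mono)
  also have "\<dots> = msz A ^ n * (\<Sum>z\<in>UNIV. \<bar>A z y\<bar>)" by (simp add: sum_distrib_left)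
  also have "\<dots> \<le> msz A ^ n * msz A" by (intro mult_left_mono msz_ge) (simp add: msz_nonneg)
  finally show ?case by (simp add: mult.commute)
qed

lemma mexp_series: "mexp t A x y = (\<Sum>n. (mpow A n x y / fact n) * t ^ n)"
  unfolding mexp_def by (rule arg_cong[where f=suminf]) (auto simp: field_simps)

lemma mexp_summable: "summable (\<lambda>n. (mpow A n x y / fact n) * t ^ n)"
proof (rule summable_comparison_test')
  show "summable (\<lambda>n. inverse (fact n) * (msz A * \<bar>t\<bar>) ^ n)" by (rule summable_exp)
  fix n :: nat
  have "norm ((mpow A n x y / fact n) * t ^ n) = \<bar>mpow A n x y\<bar> * \<bar>t\<bar>^n / fact n"
    by (simp add: abs_mult power_abs)
  also have "\<dots> \<le> msz A ^ n * \<bar>t\<bar>^n / fact n"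
    by (intro divide_right_mono mult_right_mono mpow_bound) auto
  finally show "norm ((mpow A n x y / fact n) * t ^ n) \<le> inverse (fact n) * (msz A * \<bar>t\<bar>) ^ n"
    by (simp add: power_mult_distrib field_simps)
qed

lemma mexp_summable': "summable (\<lambda>n. t ^ n / fact n * mpow A n x y)"
  using mexp_summable[of A x y t] by (simp add: field_simps)

lemma mpow_one: "mpow A (Suc 0) x y = A x y"
proof -
  have "(\<lambda>z. (if x = z then 1 else 0) * A z y) = (\<lambda>z. if x = z then A z y else 0)" by auto
  then show ?thesis by (simp only: mpow.simps mmult_def) simp
qed

lemma mexp_deriv: "((\<lambda>t. mexp t A x y) has_field_derivative A x y) (at 0)"
proof -
  have "((\<lambda>t. \<Sum>n. (mpow A n x y / fact n) * t ^ n) has_field_derivative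
      (\<Sum>n. diffs (\<lambda>n. mpow A n x y / fact n) n * 0 ^ n)) (at 0)"
    by (rule termdiffs_strong_converges_everywhere) (rule mexp_summable)
  moreover have "(\<lambda>n. diffs (\<lambda>n. mpow A n x y / fact n) n * (0::real) ^ n) =
       (\<lambda>n. if n = 0 then A x y else 0)"
    by (auto simp: diffs_def fun_eq_iff mpow_one simp del: mpow.simps)
  moreover have "(\<Sum>n. (if n = 0 then A x y else 0)) = A x y"
    using sums_single[of 0 "\<lambda>_. A x y"] by (simp add: sums_iff)
  ultimately show ?thesis unfolding mexp_series by simp
qed


lemma deriv_eq:
  fixes F G :: "real \<Rightarrow> real"
  assumes "(F has_field_derivative a) (at 0)" "(G has_field_derivative b) (at 0)" "\<forall>t\<ge>0. F t = G t"
  shows "a = b"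
proof -
  have fa: "((\<lambda>h. (F h - F 0)/h) \<longlongrightarrow> a) (at_right 0)"
    using assms(1) unfolding DERIV_def by (simp add: filterlim_at_split)
  have gb: "((\<lambda>h. (G h - G 0)/h) \<longlongrightarrow> b) (at_right 0)"
    using assms(2) unfolding DERIV_def by (simp add: filterlim_at_split)
  have ev: "\<forall>\<^sub>F h in at_right (0::real). (F h - F 0)/h = (G h - G 0)/h"
    using eventually_at_right_less[of 0] by eventually_elim (use assms(3) in auto)
  have "((\<lambda>h. (G h - G 0)/h) \<longlongrightarrow> a) (at_right 0)"
    using tendsto_cong[OF ev] fa by simp
  then show ?thesis using gb tendsto_unique trivial_limit_at_right_real by blast
qed

lemma gen_rowsum: "is_generator Q \<Longrightarrow> (\<Sum>h\<in>UNIV. Q g h) = 0"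
  unfolding is_generator_def
  by (subst sum.remove[of UNIV g]) auto

lemma coord_fdd_single: "coord_fdd Q z [t] [y] = (\<Sum>h\<in>{h. h z = y}. mexp t Q id h)"
proof -
  have "{hs. length hs = length [y] \<and> (\<forall>i<length [y]. (hs ! i) z = [y] ! i)} = (\<lambda>h. [h]) ` {h. h z = y}"
    by (auto simp: length_Suc_conv)
  then show ?thesis unfolding coord_fdd_def
    by (simp add: sum.reindex inj_on_def)
qed

lemma forward:
  fixes L :: "'a::{finite,order} \<Rightarrow> 'a \<Rightarrow> real"
  assumes "realizably_monotone L"
  shows "\<exists>\<Lambda> :: ('a \<Rightarrow> 'a) \<Rightarrow> real. (\<forall>f. mono f \<longrightarrow> \<Lambda> f \<ge> 0) \<and>
       (\<forall>x y. x \<noteq> y \<longrightarrow> L x y = (\<Sum>f\<in>{f. mono f \<and> f x = y}. \<Lambda> f))"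
proof -
  obtain Q :: "('a \<Rightarrow> 'a) \<Rightarrow> ('a \<Rightarrow> 'a) \<Rightarrow> real" where gQ: "is_generator Q"
    and fdd: "\<forall>z ds ys. length ds = length ys \<longrightarrow> (\<forall>d\<in>set ds. d \<ge> 0) \<longrightarrow>
            coord_fdd Q z ds ys = path_prob L z ds ys"
    and mon: "\<forall>t\<ge>0. (\<Sum>g\<in>{g. mono g}. mexp t Q id g) = 1"
    using assms unfolding realizably_monotone_def by blast
  have s1: "(\<Sum>g\<in>{g. mono g}. Q id g) = 0"
  proof (rule deriv_eq[OF _ _ mon])
    show "((\<lambda>t. \<Sum>g\<in>{g. mono g}. mexp t Q id g) has_field_derivative (\<Sum>g\<in>{g. mono g}. Q id g)) (at 0)"
      by (intro DERIV_sum mexp_deriv)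
  qed simp
  have offnn: "\<And>g. g \<noteq> id \<Longrightarrow> Q id g \<ge> 0" using gQ unfolding is_generator_def by auto
  have s2: "(\<Sum>g\<in>UNIV - {g. mono g}. Q id g) = 0"
    using gen_rowsum[OF gQ, of id] s1 sum.Int_Diff[of UNIV "Q id" "{g. mono g}"] by simp
  have nm: "\<And>g. \<not> mono g \<Longrightarrow> Q id g = 0"
  proof -
    fix g :: "'a \<Rightarrow> 'a" assume "\<not> mono g"
    have "\<forall>g\<in>UNIV - {g. mono g}. Q id g \<ge> 0"
    proof
      fix g :: "'a \<Rightarrow> 'a" assume "g \<in> UNIV - {g. mono g}"
      then have "g \<noteq> id" by (auto simp: mono_def)
      then show "Q id g \<ge> 0" by (rule offnn)
    qed
    then show "Q id g = 0" using s2 sum_nonneg_eq_0_iff[of "UNIV - {g. mono g}" "Q id"] \<open>\<not> mono g\<close>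
      by auto
  qed
  have s3: "\<And>x y. (\<Sum>h\<in>{h. h x = y}. Q id h) = L x y"
  proof -
    fix x y
    show "(\<Sum>h\<in>{h. h x = y}. Q id h) = L x y"
    proof (rule deriv_eq)
      show "((\<lambda>t. \<Sum>h\<in>{h. h x = y}. mexp t Q id h) has_field_derivative (\<Sum>h\<in>{h. h x = y}. Q id h)) (at 0)"
        by (intro DERIV_sum mexp_deriv)
      show "((\<lambda>t. mexp t L x y) has_field_derivative L x y) (at 0)" by (rule mexp_deriv)
      show "\<forall>t\<ge>0. (\<Sum>h\<in>{h. h x = y}. mexp t Q id h) = mexp t L x y"
      proof (intro allI impI)
        fix t :: real assume "t \<ge> 0"
        then have "coord_fdd Q x [t] [y] = path_prob L x [t] [y]" using fdd by simp
        then show "(\<Sum>h\<in>{h. h x = y}. mexp t Q id h) = mexp t L x y"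
          by (simp add: coord_fdd_single)
      qed
    qed
  qed
  define \<Lambda> where "\<Lambda> f = (if f = id then 0 else Q id f)" for f :: "'a \<Rightarrow> 'a"
  show ?thesis
  proof (intro exI conjI allI impI)
    fix f :: "'a \<Rightarrow> 'a" assume "mono f" then show "\<Lambda> f \<ge> 0" using offnn by (simp add: \<Lambda>_def)
  next
    fix x y :: 'a assume xy: "x \<noteq> y"
    have "L x y = (\<Sum>h\<in>{h. h x = y}. Q id h)" using s3 by simp
    also have "\<dots> = (\<Sum>h\<in>{h. mono h \<and> h x = y}. Q id h)"
      by (rule sum.mono_neutral_right) (use nm in auto)
    also have "\<dots> = (\<Sum>h\<in>{h. mono h \<and> h x = y}. \<Lambda> h)"
      by (rule sum.cong) (use xy in \<open>auto simp: \<Lambda>_def\<close>)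
    finally show "L x y = (\<Sum>f\<in>{f. mono f \<and> f x = y}. \<Lambda> f)" .
  qed
qed


lemma fiber_sum:
  fixes \<pi> :: "'b::finite \<Rightarrow> 'a::finite"
  shows "(\<Sum>k\<in>UNIV. f k) = (\<Sum>w\<in>UNIV. \<Sum>k\<in>{k. \<pi> k = w}. f k)"
  using sum.group[of UNIV UNIV \<pi> f] by simp

lemma lump_mpow:
  fixes Q :: "'b::finite \<Rightarrow> 'b \<Rightarrow> real" and L :: "'a::finite \<Rightarrow> 'a \<Rightarrow> real" and \<pi> :: "'b \<Rightarrow> 'a"
  assumes lump: "\<And>g y. (\<Sum>h\<in>{h. \<pi> h = y}. Q g h) = L (\<pi> g) y"
  shows "(\<Sum>h\<in>{h. \<pi> h = y}. mpow Q n g h) = mpow L n (\<pi> g) y"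
proof (induction n arbitrary: y)
  case 0
  show ?case by (simp add: sum.delta)
next
  case (Suc n)
  have "(\<Sum>h\<in>{h. \<pi> h = y}. mpow Q (Suc n) g h) = (\<Sum>h\<in>{h. \<pi> h = y}. \<Sum>k\<in>UNIV. mpow Q n g k * Q k h)"
    by (simp add: mmult_def)
  also have "\<dots> = (\<Sum>k\<in>UNIV. mpow Q n g k * (\<Sum>h\<in>{h. \<pi> h = y}. Q k h))"
    by (subst sum.swap) (simp add: sum_distrib_left)
  also have "\<dots> = (\<Sum>k\<in>UNIV. mpow Q n g k * L (\<pi> k) y)" by (simp add: lump)
  also have "\<dots> = (\<Sum>w\<in>UNIV. \<Sum>k\<in>{k. \<pi> k = w}. mpow Q n g k * L (\<pi> k) y)"
    by (rule fiber_sum)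
  also have "\<dots> = (\<Sum>w\<in>UNIV. (\<Sum>k\<in>{k. \<pi> k = w}. mpow Q n g k) * L w y)"
    by (simp add: sum_distrib_right)
  also have "\<dots> = (\<Sum>w\<in>UNIV. mpow L n (\<pi> g) w * L w y)" by (simp add: Suc)
  finally show ?case by (simp add: mmult_def)
qed

lemma lump_mexp:
  fixes Q :: "'b::finite \<Rightarrow> 'b \<Rightarrow> real" and L :: "'a::finite \<Rightarrow> 'a \<Rightarrow> real" and \<pi> :: "'b \<Rightarrow> 'a"
  assumes lump: "\<And>g y. (\<Sum>h\<in>{h. \<pi> h = y}. Q g h) = L (\<pi> g) y"
  shows "(\<Sum>h\<in>{h. \<pi> h = y}. mexp t Q g h) = mexp t L (\<pi> g) y"
proof -
  have "(\<Sum>h\<in>{h. \<pi> h = y}. mexp t Q g h) = (\<Sum>n. \<Sum>h\<in>{h. \<pi> h = y}. t ^ n / fact n * mpow Q n g h)"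
    unfolding mexp_def by (rule suminf_sum[symmetric]) (rule mexp_summable')
  also have "\<dots> = (\<Sum>n. t ^ n / fact n * mpow L n (\<pi> g) y)"
  proof (rule arg_cong[where f=suminf], rule ext)
    fix n
    show "(\<Sum>h\<in>{h. \<pi> h = y}. t ^ n / fact n * mpow Q n g h) = t ^ n / fact n * mpow L n (\<pi> g) y"
      by (subst sum_distrib_left[symmetric]) (simp only: lump_mpow[where \<pi>=\<pi> and Q=Q and L=L, OF lump])
  qed
  finally show ?thesis unfolding mexp_def .
qed

lemma gen_lump:
  fixes Q :: "'b::finite \<Rightarrow> 'b \<Rightarrow> real" and L :: "'a::finite \<Rightarrow> 'a \<Rightarrow> real" and \<pi> :: "'b \<Rightarrow> 'a"
  assumes gQ: "is_generator Q" and gL: "is_generator L"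
    and off: "\<And>g y. y \<noteq> \<pi> g \<Longrightarrow> (\<Sum>h\<in>{h. \<pi> h = y}. Q g h) = L (\<pi> g) y"
  shows "(\<Sum>h\<in>{h. \<pi> h = y}. Q g h) = L (\<pi> g) y"
proof (cases "y = \<pi> g")
  case False then show ?thesis by (rule off)
next
  case True
  define S where "S w = (\<Sum>h\<in>{h. \<pi> h = w}. Q g h)" for w
  have "0 = (\<Sum>h\<in>UNIV. Q g h)" using gen_rowsum[OF gQ] by simp
  also have "\<dots> = (\<Sum>w\<in>UNIV. S w)" unfolding S_def by (rule fiber_sum)
  also have "\<dots> = S (\<pi> g) + (\<Sum>w\<in>UNIV - {\<pi> g}. S w)" by (rule sum.remove) auto
  also have "(\<Sum>w\<in>UNIV - {\<pi> g}. S w) = (\<Sum>w\<in>UNIV - {\<pi> g}. L (\<pi> g) w)"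
    by (rule sum.cong) (auto simp: S_def off)
  also have "\<dots> = - L (\<pi> g) (\<pi> g)" using gL unfolding is_generator_def by simp
  finally show ?thesis using True S_def by simp
qed

lemma fdd_lump:
  fixes Q :: "('a::finite \<Rightarrow> 'a) \<Rightarrow> ('a \<Rightarrow> 'a) \<Rightarrow> real" and L :: "'a \<Rightarrow> 'a \<Rightarrow> real"
  assumes lump: "\<And>g y. (\<Sum>h\<in>{h. h z = y}. Q g h) = L (g z) y"
  shows "length ds = length ys \<Longrightarrow>
    (\<Sum>hs \<in> {hs. length hs = length ys \<and> (\<forall>i<length ys. (hs ! i) z = ys ! i)}. path_prob Q g ds hs)
     = path_prob L (g z) ds ys"
proof (induction ds ys arbitrary: g rule: list_induct2)
  case Nil
  have "{hs. length hs = length ([]::'a list) \<and> (\<forall>i<length ([]::'a list). (hs ! i) z = ([]::'a list) ! i)} = {[]}"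
    by auto
  then show ?case by simp
next
  case (Cons d ds y ys)
  define S' where "S' = {hs. length hs = length ys \<and> (\<forall>i<length ys. (hs ! i) z = ys ! i)}"
  have eq: "{hs. length hs = length (y#ys) \<and> (\<forall>i<length (y#ys). (hs ! i) z = (y#ys) ! i)}
      = (\<lambda>(h,hs). h#hs) ` ({h. h z = y} \<times> S')"
  proof (intro set_eqI iffI)
    fix hs assume "hs \<in> {hs. length hs = length (y#ys) \<and> (\<forall>i<length (y#ys). (hs ! i) z = (y#ys) ! i)}"
    then obtain h hs' where hs: "hs = h # hs'" and l: "length hs' = length ys"
      and a: "\<forall>i<Suc (length ys). (hs ! i) z = (y#ys) ! i"
      by (auto simp: length_Suc_conv)
    have "h z = y" using a[rule_format, of 0] hs by simp
    moreover have "\<forall>i<length ys. (hs' ! i) z = ys ! i"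
      using a hs by auto
    ultimately show "hs \<in> (\<lambda>(h,hs). h#hs) ` ({h. h z = y} \<times> S')"
      using hs l unfolding S'_def by auto
  next
    fix hs assume "hs \<in> (\<lambda>(h,hs). h#hs) ` ({h. h z = y} \<times> S')"
    then show "hs \<in> {hs. length hs = length (y#ys) \<and> (\<forall>i<length (y#ys). (hs ! i) z = (y#ys) ! i)}"
      unfolding S'_def by (auto simp: nth_Cons split: nat.splits)
  qed
  have inj: "inj_on (\<lambda>(h,hs). h#hs) ({h. h z = y} \<times> S')" by (auto simp: inj_on_def)
  have "(\<Sum>hs \<in> {hs. length hs = length (y#ys) \<and> (\<forall>i<length (y#ys). (hs ! i) z = (y#ys) ! i)}.
           path_prob Q g (d#ds) hs)
      = (\<Sum>(h,hs)\<in>{h. h z = y} \<times> S'. mexp d Q g h * path_prob Q h ds hs)"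
    unfolding eq by (subst sum.reindex[OF inj]) (simp add: case_prod_unfold)
  also have "\<dots> = (\<Sum>h\<in>{h. h z = y}. mexp d Q g h * (\<Sum>hs\<in>S'. path_prob Q h ds hs))"
    by (simp add: sum.cartesian_product[symmetric] sum_distrib_left)
  also have "\<dots> = (\<Sum>h\<in>{h. h z = y}. mexp d Q g h * path_prob L y ds ys)"
    by (rule sum.cong) (auto simp: S'_def Cons.IH)
  also have "\<dots> = mexp d L (g z) y * path_prob L y ds ys"
    by (simp add: sum_distrib_right[symmetric] lump_mexp[where \<pi>="\<lambda>h. h z" and Q=Q and L=L, OF lump])
  finally show ?case by simp
qed


lemma mpow_rowsum: "is_generator Q \<Longrightarrow> (\<Sum>h\<in>UNIV. mpow Q n g h) = (if n = 0 then 1 else 0)"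
proof (induction n)
  case 0 then show ?case by simp
next
  case (Suc n)
  have "(\<Sum>h\<in>UNIV. mpow Q (Suc n) g h) = (\<Sum>h\<in>UNIV. \<Sum>k\<in>UNIV. mpow Q n g k * Q k h)"
    by (simp add: mmult_def)
  also have "\<dots> = (\<Sum>k\<in>UNIV. mpow Q n g k * (\<Sum>h\<in>UNIV. Q k h))"
    by (subst sum.swap) (simp add: sum_distrib_left)
  also have "\<dots> = 0" using gen_rowsum[OF Suc.prems] by simp
  finally show ?case by simp
qed

lemma mexp_rowsum: "is_generator Q \<Longrightarrow> (\<Sum>h\<in>UNIV. mexp t Q g h) = 1"
proof -
  assume g: "is_generator Q"
  have "(\<Sum>h\<in>UNIV. mexp t Q g h) = (\<Sum>n. \<Sum>h\<in>UNIV. t ^ n / fact n * mpow Q n g h)"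
    unfolding mexp_def by (rule suminf_sum[symmetric]) (rule mexp_summable')
  also have "\<dots> = (\<Sum>n. if n = 0 then 1 else 0)"
  proof (rule arg_cong[where f=suminf], rule ext)
    fix n
    show "(\<Sum>h\<in>UNIV. t ^ n / fact n * mpow Q n g h) = (if n = 0 then 1 else 0)"
      by (subst sum_distrib_left[symmetric]) (simp add: mpow_rowsum[OF g])
  qed
  also have "\<dots> = 1" using sums_single[of 0 "\<lambda>_. 1::real"] by (simp add: sums_iff)
  finally show ?thesis .
qed

lemma mpow_closed:
  fixes Q :: "('a::{finite,order} \<Rightarrow> 'a) \<Rightarrow> ('a \<Rightarrow> 'a) \<Rightarrow> real"
  assumes cl: "\<And>g h. mono g \<Longrightarrow> \<not> mono h \<Longrightarrow> Q g h = 0" and g0: "mono g0"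
  shows "\<not> mono h \<Longrightarrow> mpow Q n g0 h = 0"
proof (induction n arbitrary: h)
  case 0 then show ?case using g0 by auto
next
  case (Suc n)
  have "mpow Q (Suc n) g0 h = (\<Sum>k\<in>UNIV. mpow Q n g0 k * Q k h)" by (simp add: mmult_def)
  also have "\<dots> = 0"
  proof (rule sum.neutral, rule ballI)
    fix k show "mpow Q n g0 k * Q k h = 0"
      by (cases "mono k") (auto simp: cl Suc.prems Suc.IH)
  qed
  finally show ?case .
qed

lemma backward:
  fixes L :: "'a::{finite,order} \<Rightarrow> 'a \<Rightarrow> real"
  assumes gL: "is_generator L"
    and lam: "\<forall>f. mono f \<longrightarrow> \<Lambda> f \<ge> 0"
    and rep: "\<forall>x y. x \<noteq> y \<longrightarrow> L x y = (\<Sum>f\<in>{f. mono f \<and> f x = y}. \<Lambda> f)"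
  shows "realizably_monotone L"
proof -
  define R :: "('a \<Rightarrow> 'a) \<Rightarrow> ('a \<Rightarrow> 'a) \<Rightarrow> real"
    where "R g h = (\<Sum>f\<in>{f. mono f \<and> f \<circ> g = h}. \<Lambda> f)" for g h
  define Q :: "('a \<Rightarrow> 'a) \<Rightarrow> ('a \<Rightarrow> 'a) \<Rightarrow> real"
    where "Q g h = (if g = h then - (\<Sum>k\<in>UNIV - {g}. R g k) else R g h)" for g h
  have Rnn: "R g h \<ge> 0" for g h unfolding R_def using lam by (intro sum_nonneg) auto
  have gQ: "is_generator Q"
    unfolding is_generator_def
  proof (intro conjI allI impI)
    fix g h :: "'a \<Rightarrow> 'a" assume "g \<noteq> h" then show "Q g h \<ge> 0" by (simp add: Q_def Rnn)
  next
    fix g :: "'a \<Rightarrow> 'a"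
    show "Q g g = - (\<Sum>k\<in>UNIV - {g}. Q g k)"
      by (simp add: Q_def)
  qed
  have off: "(\<Sum>h\<in>{h. h z = y}. Q g h) = L (g z) y" if ne: "y \<noteq> g z" for g z y
  proof -
    have "(\<Sum>h\<in>{h. h z = y}. Q g h) = (\<Sum>h\<in>{h. h z = y}. R g h)"
      by (rule sum.cong) (use ne in \<open>auto simp: Q_def\<close>)
    also have "\<dots> = (\<Sum>h\<in>{h. h z = y}. \<Sum>f\<in>{f. f \<in> {f. mono f \<and> f (g z) = y} \<and> f \<circ> g = h}. \<Lambda> f)"
      unfolding R_def
    proof (rule sum.cong[OF refl])
      fix h :: "'a \<Rightarrow> 'a" assume "h \<in> {h. h z = y}"
      then have "{f. mono f \<and> f \<circ> g = h} = {f. f \<in> {f. mono f \<and> f (g z) = y} \<and> f \<circ> g = h}"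
        by (auto simp: fun_eq_iff)
      then show "(\<Sum>f\<in>{f. mono f \<and> f \<circ> g = h}. \<Lambda> f) = (\<Sum>f\<in>{f. f \<in> {f. mono f \<and> f (g z) = y} \<and> f \<circ> g = h}. \<Lambda> f)"
        by simp
    qed
    also have "\<dots> = (\<Sum>f\<in>{f. mono f \<and> f (g z) = y}. \<Lambda> f)"
      by (rule sum.group) auto
    also have "\<dots> = L (g z) y" using rep ne by simp
    finally show ?thesis .
  qed
  have lump: "(\<Sum>h\<in>{h. h z = y}. Q g h) = L (g z) y" for g z y
    using gen_lump[where \<pi>="\<lambda>h. h z" and Q=Q and L=L, OF gQ gL] off by blast
  have cl: "Q g h = 0" if "mono g" "\<not> mono h" for g h
  proof -
    have "g \<noteq> h" using that by auto
    moreover have e: "{f. mono f \<and> f \<circ> g = h} = {}"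
      using that by (auto simp: mono_def)
    ultimately show ?thesis unfolding Q_def R_def by (simp only: e if_False sum.empty)
  qed
  have monoid: "mono (id :: 'a \<Rightarrow> 'a)" by (simp add: mono_def)
  show ?thesis unfolding realizably_monotone_def
  proof (intro exI conjI allI impI)
    show "is_generator Q" by (rule gQ)
  next
    fix z :: 'a and ds :: "real list" and ys :: "'a list"
    assume "length ds = length ys"
    then show "coord_fdd Q z ds ys = path_prob L z ds ys"
      unfolding coord_fdd_def using fdd_lump[where Q=Q and L=L and z=z and g=id, OF lump] by simp
  next
    fix t :: real
    have "(\<Sum>g\<in>{g. mono g}. mexp t Q id g) = (\<Sum>g\<in>UNIV. mexp t Q id g)"
    proof (rule sum.mono_neutral_left)
      show "\<forall>g\<in>UNIV - {g. mono g}. mexp t Q id g = 0"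
        unfolding mexp_def using mpow_closed[where Q=Q, OF cl monoid] by simp
    qed auto
    also have "\<dots> = 1" by (rule mexp_rowsum[OF gQ])
    finally show "(\<Sum>g\<in>{g. mono g}. mexp t Q id g) = 1" .
  qed
qed

theorem proposition2p1:
  fixes L :: "'a::{finite,order} \<Rightarrow> 'a \<Rightarrow> real"
  assumes "is_generator L"
  shows "realizably_monotone L \<longleftrightarrow>
    (\<exists>\<Lambda> :: ('a \<Rightarrow> 'a) \<Rightarrow> real. (\<forall>f. mono f \<longrightarrow> \<Lambda> f \<ge> 0) \<and>
       (\<forall>x y. x \<noteq> y \<longrightarrow> L x y = (\<Sum>f\<in>{f. mono f \<and> f x = y}. \<Lambda> f)))"
  using forward backward assms by blast

end
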